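(* Let $A$ be a finite set of actions and let $\{\pi_\theta\}_{\theta\in\mathbb{R}^d}$ be a family of probability distributions on $A$ with $\pi_\theta(a)>0$ and $\theta\mapsto\pi_\theta(a)$ differentiable for every $a\in A$. Let $R:A\to\mathbb{R}$ be the reward function, let $A$ also denote the random action drawn from $\pi_\theta$, and write $R=R(A)$ for the resulting reward random variable. Define the objective $\eta_s(\theta):=\mathbb{E}_{a\sim\pi_\theta}[R(a)]$, its gradient $g_s(\theta):=\nabla_\theta\eta_s(\theta)$, and the score function $S_\theta(a):=\nabla_\theta\log\pi_\theta(a)$. Assume that for all $a\in A$, $$\|S_\theta(a)\|\le G_{\max},\qquad |R(a)|\le R_{\max}.$$ Then $$\|g_s(\theta)\|\le \sqrt{2}\,G_{\max}R_{\max}\sqrt{I(A;R)},$$ where $I(A;R)$ is the mutual information between the action $A\sim\pi_\theta$ and the reward $R$.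
   Context: This is the "one-shot game" (horizon one): the state is fixed, the agent draws an action $a\sim\pi_\theta$ and receives reward $R(a)$. $\|\cdot\|$ is the Euclidean norm on $\mathbb{R}^d$. Mutual information is taken with the natural logarithm. *)

theory Defs
  imports "HOL-Analysis.Analysis"
begin

text \<open>Gradient of a real-valued function on a Euclidean space: the (unique, when f is
differentiable at x) vector g whose inner product represents the Frechet derivative.\<close>
definition grad :: "('v::euclidean_space \<Rightarrow> real) \<Rightarrow> 'v \<Rightarrow> 'v" where
  "grad f x = (SOME g. (f has_derivative (\<lambda>h. g \<bullet> h)) (at x))"

definition mutual_info ::
  "('a::finite \<Rightarrow> real) \<Rightarrow> ('a \<Rightarrow> 'b) \<Rightarrow> ('a \<Rightarrow> 'c) \<Rightarrow> real" where
  "mutual_info p X Y =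
     (\<Sum>x\<in>X ` UNIV. \<Sum>y\<in>Y ` UNIV.
        let pxy = (\<Sum>a | X a = x \<and> Y a = y. p a);
            px  = (\<Sum>a | X a = x. p a);
            py  = (\<Sum>a | Y a = y. p a)
        in if pxy = 0 then 0 else pxy * ln (pxy / (px * py)))"

end

theory Submission
  imports Defs
begin

lemma lin_repr:
  fixes f :: "'v::euclidean_space \<Rightarrow> real"
  assumes "linear f"
  shows "f = (\<lambda>h. (\<Sum>b\<in>Basis. f b *\<^sub>R b) \<bullet> h)"
proof
  fix h :: 'v
  have "f h = f (\<Sum>b\<in>Basis. (h \<bullet> b) *\<^sub>R b)" by (simp add: euclidean_representation)
  also have "\<dots> = (\<Sum>b\<in>Basis. (h \<bullet> b) * f b)"
    using assms by (simp add: linear_sum linear_scale)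
  also have "\<dots> = (\<Sum>b\<in>Basis. f b * (b \<bullet> h))"
    by (rule sum.cong) (auto simp: inner_commute)
  also have "\<dots> = (\<Sum>b\<in>Basis. f b *\<^sub>R b) \<bullet> h"
    by (simp add: inner_sum_left)
  finally show "f h = (\<Sum>b\<in>Basis. f b *\<^sub>R b) \<bullet> h" .
qed

lemma grad_works:
  fixes f :: "'v::euclidean_space \<Rightarrow> real"
  assumes "f differentiable (at x)"
  shows "(f has_derivative (\<lambda>h. grad f x \<bullet> h)) (at x)"
proof -
  obtain f' where d: "(f has_derivative f') (at x)" using assms differentiable_def by blast
  then have "linear f'" using has_derivative_linear by blast
  then have "f' = (\<lambda>h. (\<Sum>b\<in>Basis. f' b *\<^sub>R b) \<bullet> h)" by (rule lin_repr)
  then have "\<exists>g. (f has_derivative (\<lambda>h. g \<bullet> h)) (at x)" using d by metis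
  then show ?thesis unfolding grad_def by (rule someI_ex)
qed

lemma grad_eq:
  fixes f :: "'v::euclidean_space \<Rightarrow> real"
  assumes "(f has_derivative (\<lambda>h. g \<bullet> h)) (at x)"
  shows "grad f x = g"
proof -
  have "(f has_derivative (\<lambda>h. grad f x \<bullet> h)) (at x)"
    using assms grad_works differentiable_def by blast
  then have "(\<lambda>h. grad f x \<bullet> h) = (\<lambda>h. g \<bullet> h)" using assms has_derivative_unique by blast
  then have "grad f x \<bullet> (grad f x - g) = g \<bullet> (grad f x - g)" by metis
  then have "(grad f x - g) \<bullet> (grad f x - g) = 0" by (simp add: inner_diff_left)
  then show ?thesis by simp
qed

theorem theorem1:
  fixes \<pi> :: "'v::euclidean_space \<Rightarrow> 'a::finite \<Rightarrow> real"
    and R :: "'a \<Rightarrow> real"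
    and \<theta> :: 'v
    and G_max R_max :: real
  assumes pos: "\<And>\<phi> a. \<pi> \<phi> a > 0"
    and prob: "\<And>\<phi>. (\<Sum>a\<in>UNIV. \<pi> \<phi> a) = 1"
    and diff: "\<And>\<phi> a. (\<lambda>t. \<pi> t a) differentiable (at \<phi>)"
    and score_bound: "\<And>a. norm (grad (\<lambda>t. ln (\<pi> t a)) \<theta>) \<le> G_max"
    and reward_bound: "\<And>a. \<bar>R a\<bar> \<le> R_max"
  shows "norm (grad (\<lambda>t. \<Sum>a\<in>UNIV. \<pi> t a * R a) \<theta>)
           \<le> sqrt 2 * G_max * R_max * sqrt (mutual_info (\<pi> \<theta>) (\<lambda>a. a) R)"
proof -
  define p where "p = \<pi> \<theta>"
  define D where "D a = grad (\<lambda>t. \<pi> t a) \<theta>" for a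
  have hD: "((\<lambda>t. \<pi> t a) has_derivative (\<lambda>h. D a \<bullet> h)) (at \<theta>)" for a
    unfolding D_def by (rule grad_works[OF diff])
  have hL: "grad (\<lambda>t. ln (\<pi> t a)) \<theta> = (1 / p a) *\<^sub>R D a" for a
  proof (rule grad_eq)
    have "((\<lambda>t. ln (\<pi> t a)) has_derivative (\<lambda>h. (D a \<bullet> h) * inverse (\<pi> \<theta> a))) (at \<theta>)"
      by (rule has_derivative_ln[OF _ hD]) (use pos in auto)
    then show "((\<lambda>t. ln (\<pi> t a)) has_derivative (\<lambda>h. ((1 / p a) *\<^sub>R D a) \<bullet> h)) (at \<theta>)"
      by (simp add: p_def divide_inverse mult.commute)
  qed
  have G0: "G_max \<ge> 0" using score_bound[of undefined] norm_ge_zero order_trans by blast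
  have R0: "R_max \<ge> 0" using reward_bound[of undefined] by linarith
  have pp: "p a > 0" for a using pos p_def by simp
  have psum: "(\<Sum>a\<in>UNIV. p a) = 1" using prob p_def by simp
  have Dn: "norm (D a) \<le> p a * G_max" for a
  proof -
    have "norm ((1 / p a) *\<^sub>R D a) \<le> G_max" using score_bound[of a] hL[of a] by simp
    then have "norm (D a) / p a \<le> G_max" using pp[of a] by simp
    then show ?thesis using pp[of a] by (simp add: divide_le_eq mult.commute)
  qed
  have Dsum: "(\<Sum>a\<in>UNIV. D a) = 0"
  proof -
    have "((\<lambda>t. \<Sum>a\<in>UNIV. \<pi> t a) has_derivative (\<lambda>h. \<Sum>a\<in>UNIV. D a \<bullet> h)) (at \<theta>)"
      by (rule has_derivative_sum) (rule hD)
    then have "((\<lambda>t. \<Sum>a\<in>UNIV. \<pi> t a) has_derivative (\<lambda>h. (\<Sum>a\<in>UNIV. D a) \<bullet> h)) (at \<theta>)"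
      by (simp add: inner_sum_left)
    then have e1: "grad (\<lambda>t. \<Sum>a\<in>UNIV. \<pi> t a) \<theta> = (\<Sum>a\<in>UNIV. D a)" by (rule grad_eq)
    have "((\<lambda>t. \<Sum>a\<in>UNIV. \<pi> t a) has_derivative (\<lambda>h. 0 \<bullet> h)) (at \<theta>)"
      using prob by simp
    then have "grad (\<lambda>t. \<Sum>a\<in>UNIV. \<pi> t a) \<theta> = 0" by (rule grad_eq)
    then show ?thesis using e1 by simp
  qed
  have hg: "grad (\<lambda>t. \<Sum>a\<in>UNIV. \<pi> t a * R a) \<theta> = (\<Sum>a\<in>UNIV. R a *\<^sub>R D a)"
  proof (rule grad_eq)
    have "((\<lambda>t. \<Sum>a\<in>UNIV. \<pi> t a * R a) has_derivative (\<lambda>h. \<Sum>a\<in>UNIV. (D a \<bullet> h) * R a)) (at \<theta>)"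
      by (intro has_derivative_sum has_derivative_mult_left hD)
    then show "((\<lambda>t. \<Sum>a\<in>UNIV. \<pi> t a * R a) has_derivative (\<lambda>h. (\<Sum>a\<in>UNIV. R a *\<^sub>R D a) \<bullet> h)) (at \<theta>)"
      by (simp add: inner_sum_left mult.commute)
  qed
  define g where "g = (\<Sum>a\<in>UNIV. R a *\<^sub>R D a)"
  have gc: "norm g \<le> G_max * (\<Sum>a\<in>UNIV. \<bar>R a - c\<bar> * p a)" for c
  proof -
    have "g = (\<Sum>a\<in>UNIV. R a *\<^sub>R D a) - c *\<^sub>R (\<Sum>a\<in>UNIV. D a)" using Dsum g_def by simp
    also have "\<dots> = (\<Sum>a\<in>UNIV. (R a - c) *\<^sub>R D a)"
      by (simp add: scaleR_sum_right sum_subtractf scaleR_diff_left)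
    finally have "norm g \<le> (\<Sum>a\<in>UNIV. norm ((R a - c) *\<^sub>R D a))"
      using norm_sum by metis
    also have "\<dots> \<le> (\<Sum>a\<in>UNIV. \<bar>R a - c\<bar> * (p a * G_max))"
      by (rule sum_mono) (simp add: Dn mult_left_mono)
    finally show ?thesis by (simp add: sum_distrib_left mult_ac)
  qed
  define P where "P y = (\<Sum>a | R a = y. p a)" for y
  have Pge: "P (R x) \<ge> p x" for x
  proof -
    have "P (R x) = (\<Sum>a \<in> {a. R a = R x}. p a)" by (simp add: P_def)
    also have "\<dots> \<ge> (\<Sum>a \<in> {x}. p a)"
      by (rule sum_mono2) (auto intro: less_imp_le pp)
    finally show ?thesis by simp
  qed
  have Ppos: "P (R x) > 0" for x using Pge[of x] pp[of x] by linarith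
  have inner: "(\<Sum>y\<in>R ` UNIV.
        let pxy = (\<Sum>a | a = x \<and> R a = y. p a);
            px  = (\<Sum>a | a = x. p a);
            py  = (\<Sum>a | R a = y. p a)
        in if pxy = 0 then 0 else pxy * ln (pxy / (px * py))) = - p x * ln (P (R x))" for x
  proof -
    have "(let pxy = (\<Sum>a | a = x \<and> R a = y. p a);
            px  = (\<Sum>a | a = x. p a);
            py  = (\<Sum>a | R a = y. p a)
        in if pxy = 0 then 0 else pxy * ln (pxy / (px * py))) =
        (if R x = y then - p x * ln (P (R x)) else 0)" for y
    proof -
      have e1: "{a. a = x \<and> R a = y} = (if R x = y then {x} else {})" by auto
      have e2: "{a. a = x} = {x}" by auto
      show ?thesis
      proof (cases "R x = y")
        case True
        have "ln (p x / (p x * P (R x))) = - ln (P (R x))"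
          using pp[of x] Ppos[of x] by (simp add: ln_div ln_mult)
        then show ?thesis using True pp[of x] unfolding Let_def e1 e2 by (simp add: P_def)
      next
        case False
        then show ?thesis unfolding Let_def e1 by simp
      qed
    qed
    then have "(\<Sum>y\<in>R ` UNIV.
        let pxy = (\<Sum>a | a = x \<and> R a = y. p a);
            px  = (\<Sum>a | a = x. p a);
            py  = (\<Sum>a | R a = y. p a)
        in if pxy = 0 then 0 else pxy * ln (pxy / (px * py))) =
        (\<Sum>y\<in>R ` UNIV. if R x = y then - p x * ln (P (R x)) else 0)"
      by (intro sum.cong) auto
    also have "\<dots> = - p x * ln (P (R x))" by (simp add: sum.delta)
    finally show ?thesis .
  qed
  have MI: "mutual_info p (\<lambda>a. a) R = (\<Sum>x\<in>UNIV. - p x * ln (P (R x)))"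
    unfolding mutual_info_def using inner by simp
  obtain a0 where a0: "\<And>a. P (R a) \<le> P (R a0)"
  proof -
    have "finite ((\<lambda>a. P (R a)) ` UNIV)" by simp
    then have "Max ((\<lambda>a. P (R a)) ` UNIV) \<in> (\<lambda>a. P (R a)) ` UNIV" by (intro Max_in) auto
    then obtain a0 where "P (R a0) = Max ((\<lambda>a. P (R a)) ` UNIV)" by (metis imageE)
    then show ?thesis using that by (metis Max_ge finite UNIV_I finite_imageI image_eqI)
  qed
  define c where "c = R a0"
  define x where "x = 1 - P c"
  have Hx: "mutual_info p (\<lambda>a. a) R \<ge> x"
  proof -
    have "(\<Sum>a\<in>UNIV. p a * (1 - P c)) \<le> (\<Sum>a\<in>UNIV. - p a * ln (P (R a)))"
    proof (rule sum_mono)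
      fix a :: 'a
      have "ln (P (R a)) \<le> P (R a) - 1" using Ppos ln_le_minus_one by blast
      then have "1 - P c \<le> - ln (P (R a))" using a0[of a] unfolding c_def by linarith
      then show "p a * (1 - P c) \<le> - p a * ln (P (R a))"
        using pp[of a] mult_left_mono[of "1 - P c" "- ln (P (R a))" "p a"] by simp
    qed
    then show ?thesis using MI psum x_def by (simp add: sum_distrib_right[symmetric])
  qed
  have xsplit: "x = (\<Sum>a | R a \<noteq> c. p a)"
  proof -
    have "(\<Sum>a\<in>UNIV. p a) = (\<Sum>a | R a = c. p a) + (\<Sum>a | R a \<noteq> c. p a)"
    proof -
      have u: "(UNIV::'a set) = {a. R a = c} \<union> {a. R a \<noteq> c}" by auto
      show ?thesis by (subst u, rule sum.union_disjoint) auto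
    qed
    then show ?thesis using psum x_def P_def by simp
  qed
  have x0: "0 \<le> x" using xsplit by (simp add: sum_nonneg less_imp_le pp)
  have x1: "x \<le> 1" using x_def Ppos[of a0] c_def by simp
  have bA: "norm g \<le> G_max * R_max"
  proof -
    have "(\<Sum>a\<in>UNIV. \<bar>R a - 0\<bar> * p a) \<le> (\<Sum>a\<in>UNIV. R_max * p a)"
      by (rule sum_mono) (simp add: mult_right_mono reward_bound less_imp_le pp)
    then have "(\<Sum>a\<in>UNIV. \<bar>R a - 0\<bar> * p a) \<le> R_max"
      using psum by (simp add: sum_distrib_left[symmetric])
    then show ?thesis using gc[of 0] G0 by (meson mult_left_mono order_trans)
  qed
  have bB: "norm g \<le> G_max * (2 * R_max * x)"
  proof -
    have "(\<Sum>a\<in>UNIV. \<bar>R a - c\<bar> * p a) \<le> (\<Sum>a\<in>UNIV. (if R a = c then 0 else 2 * R_max * p a))"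
    proof (rule sum_mono)
      fix a
      have "\<bar>R a - c\<bar> \<le> 2 * R_max" using reward_bound[of a] reward_bound[of a0] c_def by linarith
      then show "\<bar>R a - c\<bar> * p a \<le> (if R a = c then 0 else 2 * R_max * p a)"
        using pp[of a] by (simp add: mult_right_mono less_imp_le)
    qed
    also have "\<dots> = (\<Sum>a | R a \<noteq> c. 2 * R_max * p a)"
      by (simp add: sum.If_cases Compl_eq set_diff_eq)
    also have "\<dots> = 2 * R_max * x" using xsplit by (simp add: sum_distrib_left)
    finally show ?thesis using gc[of c] G0 by (meson mult_left_mono order_trans)
  qed
  have key: "min 1 (2 * x) \<le> sqrt 2 * sqrt x"
  proof (cases "2 * x \<le> 1")
    case True
    have "(2 * x) ^ 2 \<le> 2 * x" using True x0 mult_right_mono[of "2 * x" 1 x] by (simp add: power2_eq_square)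
    then have "2 * x \<le> sqrt (2 * x)" using x0 real_le_rsqrt by blast
    then show ?thesis by (simp add: real_sqrt_mult)
  next
    case False
    then have "1 \<le> sqrt (2 * x)" by simp
    then show ?thesis by (simp add: real_sqrt_mult)
  qed
  have "norm g \<le> G_max * R_max * min 1 (2 * x)"
    using bA bB by (simp add: min_def mult_ac)
  also have "\<dots> \<le> G_max * R_max * (sqrt 2 * sqrt x)"
    using key G0 R0 by (simp add: mult_left_mono)
  also have "\<dots> \<le> G_max * R_max * (sqrt 2 * sqrt (mutual_info p (\<lambda>a. a) R))"
    using Hx G0 R0 by (simp add: mult_left_mono)
  finally show ?thesis using hg g_def p_def by (simp add: mult_ac)
qed

end
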